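(* Let $E$ be a Banach space, $S:\mathbb{R}^d\times E\to\mathbb{R}^d$ a map and $x_0\in\mathbb{R}^d$. Suppose there exist a closed ball $D\subset\mathbb{R}^d$ (of positive radius) and a continuous map $f:D\to E$ such that $S(x_0,f(x))=x$ for all $x\in D$. Then $S$ is solidly controllable from $x_0$ with the compact set $Q=f(D)$.
   Context: Solid controllability: a map $S:\mathbb{R}^d\times E\to\mathbb{R}^d$, $E$ a Banach space, is solidly controllable from $x_0$ with a compact set $Q\subset E$ if there exist a ball $G\subset\mathbb{R}^d$ and a number $\epsilon>0$ such that every continuous map $\Phi:Q\to\mathbb{R}^d$ satisfying $\sup_{\zeta\in Q}|\Phi(\zeta)-S(x_0,\zeta)|\le\epsilon$ satisfies $\Phi(Q)\supseteq G$. *)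

theory Defs
  imports "HOL-Analysis.Analysis"
begin

definition solidly_controllable ::
  "(real^'d \<Rightarrow> 'e::banach \<Rightarrow> real^'d) \<Rightarrow> real^'d \<Rightarrow> 'e set \<Rightarrow> bool" where
  "solidly_controllable S x0 Q \<longleftrightarrow>
     (\<exists>c r \<epsilon>. r > 0 \<and> \<epsilon> > 0 \<and>
        (\<forall>\<Phi>. continuous_on Q \<Phi> \<longrightarrow>
              (\<forall>\<zeta>\<in>Q. norm (\<Phi> \<zeta> - S x0 \<zeta>) \<le> \<epsilon>) \<longrightarrow>
              ball c r \<subseteq> \<Phi> ` Q))"

end

theory Submission
  imports Defs
begin

theorem mainTheorem6:
  fixes S :: "real^'d \<Rightarrow> 'e::banach \<Rightarrow> real^'d"
    and x0 :: "real^'d" and a :: "real^'d" and \<rho> :: real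
    and f :: "real^'d \<Rightarrow> 'e"
  assumes "\<rho> > 0"
    and "continuous_on (cball a \<rho>) f"
    and "\<forall>x\<in>cball a \<rho>. S x0 (f x) = x"
  shows "compact (f ` cball a \<rho>) \<and> solidly_controllable S x0 (f ` cball a \<rho>)"
proof
  show "compact (f ` cball a \<rho>)"
    by (rule compact_continuous_image[OF assms(2) compact_cball])
  show "solidly_controllable S x0 (f ` cball a \<rho>)"
    unfolding solidly_controllable_def
  proof (rule exI[of _ a], rule exI[of _ "\<rho>/2"], rule exI[of _ "\<rho>/2"], intro conjI allI impI)
    show "\<rho>/2 > 0" "\<rho>/2 > 0" using assms(1) by auto
    fix \<Phi> :: "'e \<Rightarrow> real^'d"
    assume c: "continuous_on (f ` cball a \<rho>) \<Phi>"
      and cl: "\<forall>\<zeta>\<in>f ` cball a \<rho>. norm (\<Phi> \<zeta> - S x0 \<zeta>) \<le> \<rho>/2"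
    have cg: "continuous_on (cball a \<rho>) (\<Phi> \<circ> f)"
      using continuous_on_compose[OF assms(2) c] .
    have close: "norm (y - (\<Phi> \<circ> f) y) \<le> \<rho>/2" if "y \<in> cball a \<rho>" for y
    proof -
      have "norm (\<Phi> (f y) - S x0 (f y)) \<le> \<rho>/2" using cl that by auto
      moreover have "S x0 (f y) = y" using assms(3) that by auto
      ultimately show ?thesis by (simp add: norm_minus_commute)
    qed
    show "ball a (\<rho>/2) \<subseteq> \<Phi> ` f ` cball a \<rho>"
    proof
      fix x assume x: "x \<in> ball a (\<rho>/2)"
      have "\<exists>y\<in>cball a \<rho>. (\<Phi> \<circ> f) y = x"
      proof (rule brouwer_surjective[OF compact_cball convex_cball _ cg _ x])
        show "cball a \<rho> \<noteq> {}" using assms(1) by auto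
        fix x' y assume x': "x' \<in> ball a (\<rho>/2)" and y: "y \<in> cball a \<rho>"
        have "dist a (x' + (y - (\<Phi> \<circ> f) y)) \<le> dist a x' + norm (y - (\<Phi> \<circ> f) y)"
        proof -
          have eq: "a - (x' + (y - (\<Phi> \<circ> f) y)) = (a - x') - (y - (\<Phi> \<circ> f) y)" by simp
          show ?thesis unfolding dist_norm eq by (rule norm_triangle_ineq4)
        qed
        also have "\<dots> \<le> \<rho>" using x' close[OF y] by (simp add: dist_commute)
        finally show "x' + (y - (\<Phi> \<circ> f) y) \<in> cball a \<rho>" unfolding mem_cball .
      qed
      then obtain y where y: "y \<in> cball a \<rho>" "(\<Phi> \<circ> f) y = x" by (rule bexE)
      then have xe: "x = \<Phi> (f y)" by simp
      show "x \<in> \<Phi> ` f ` cball a \<rho>" using image_eqI[of x \<Phi> "f y", OF xe imageI[of y "cball a \<rho>" f, OF y(1)]] .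
    qed
  qed
qed

end
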